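(* Let $n\ge2$. The space of homogeneous quasi-morphisms $F_n\to\mathbb{R}$ that vanish on every element of $\mathrm{cut}_n$ is infinite dimensional.
   Context: Fix a basis $a_1,\dots,a_n$ of $F_n$; $\bar g$ denotes $g^{-1}$. For a cyclically reduced word $w=l_1\cdots l_k$, its Whitehead graph $\Omega(w)$ has $2n$ vertices labeled $a_1,\dots,a_n,\bar a_1,\dots,\bar a_n$; for each pair of adjacent letters $l_il_{i+1}$ there is an edge joining $l_i$ and $\bar l_{i+1}$, and there is additionally an edge joining $l_k$ and $\bar l_1$; multiple edges between the same pair of vertices are replaced by a single edge. The Whitehead graph of a non-cyclically-reduced word is that of its cyclic reduction. A vertex is a cut vertex if removing it and its incident edges disconnects the graph. $\mathrm{cut}_n$ is the set of $w\in F_n$ such that $\Omega(w)$ has a cut vertex. A quasi-morphism $q:F_n\to\mathbb R$ satisfies $\sup_{g,h}|q(gh)-q(g)-q(h)|<\infty$; it is homogeneous if $q(g^k)=kq(g)$ for all $g$, $k\in\mathbb Z$. *)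

theory Defs
  imports Complex_Main
begin

text \<open>Free group F_n: elements are reduced words over letters (i, b) with i < n;
  (i, True) stands for a_{i+1}, (i, False) for its inverse.\<close>

type_synonym letter = "nat \<times> bool"

definition inv_letter :: "letter \<Rightarrow> letter" where
  "inv_letter l = (fst l, \<not> snd l)"

definition reduced :: "letter list \<Rightarrow> bool" where
  "reduced w \<longleftrightarrow> (\<forall>i. Suc i < length w \<longrightarrow> w ! Suc i \<noteq> inv_letter (w ! i))"

definition push_letter :: "letter list \<Rightarrow> letter \<Rightarrow> letter list" where
  "push_letter st x = (case st of [] \<Rightarrow> [x]
      | y # ys \<Rightarrow> (if y = inv_letter x then ys else x # st))"

definition reduce :: "letter list \<Rightarrow> letter list" where
  "reduce w = rev (foldl push_letter [] w)"

definition Fn :: "nat \<Rightarrow> letter list set" where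
  "Fn n = {w. reduced w \<and> set w \<subseteq> {0..<n} \<times> UNIV}"

definition fmult :: "letter list \<Rightarrow> letter list \<Rightarrow> letter list" where
  "fmult u v = reduce (u @ v)"

definition finv :: "letter list \<Rightarrow> letter list" where
  "finv w = rev (map inv_letter w)"

definition fpow :: "letter list \<Rightarrow> int \<Rightarrow> letter list" where
  "fpow w k = (if 0 \<le> k then reduce (concat (replicate (nat k) w))
               else reduce (concat (replicate (nat (- k)) (finv w))))"

function cyc_red :: "letter list \<Rightarrow> letter list" where
  "cyc_red w = (if 2 \<le> length w \<and> last w = inv_letter (hd w)
                then cyc_red (butlast (tl w)) else w)"
  by auto
termination by (relation "measure length") auto

definition wh_vertices :: "nat \<Rightarrow> letter set" where
  "wh_vertices n = {0..<n} \<times> UNIV"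

definition wh_edges :: "letter list \<Rightarrow> (letter \<times> letter) set" where
  "wh_edges w = (let c = cyc_red (reduce w); k = length c in
     (let E = {(c ! i, inv_letter (c ! ((i + 1) mod k))) | i. i < k} in E \<union> E\<inverse>))"

definition graph_connected :: "'a set \<Rightarrow> ('a \<times> 'a) set \<Rightarrow> bool" where
  "graph_connected V E \<longleftrightarrow> (\<forall>u\<in>V. \<forall>v\<in>V. (u, v) \<in> (E \<inter> (V \<times> V))\<^sup>*)"

definition has_cut_vertex :: "nat \<Rightarrow> letter list \<Rightarrow> bool" where
  "has_cut_vertex n w \<longleftrightarrow>
     (\<exists>v\<in>wh_vertices n. \<not> graph_connected (wh_vertices n - {v}) (wh_edges w))"

definition cut :: "nat \<Rightarrow> letter list set" where
  "cut n = {w \<in> Fn n. has_cut_vertex n w}"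

definition quasi_morphism :: "nat \<Rightarrow> (letter list \<Rightarrow> real) \<Rightarrow> bool" where
  "quasi_morphism n q \<longleftrightarrow>
     (\<exists>C. \<forall>g\<in>Fn n. \<forall>h\<in>Fn n. \<bar>q (fmult g h) - q g - q h\<bar> \<le> C)"

definition homogeneous :: "nat \<Rightarrow> (letter list \<Rightarrow> real) \<Rightarrow> bool" where
  "homogeneous n q \<longleftrightarrow> (\<forall>g\<in>Fn n. \<forall>k::int. q (fpow g k) = of_int k * q g)"

text \<open>The real vector space of homogeneous quasi-morphisms F_n \<rightarrow> R vanishing on cut_n
  (functions are taken to be 0 off F_n, so that they are functions on F_n).\<close>
definition hqm_vanishing_cut :: "nat \<Rightarrow> (letter list \<Rightarrow> real) set" where
  "hqm_vanishing_cut n = {q. quasi_morphism n q \<and> homogeneous n q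
      \<and> (\<forall>w\<in>cut n. q w = 0) \<and> (\<forall>w. w \<notin> Fn n \<longrightarrow> q w = 0)}"

definition infinite_dimensional :: "('a \<Rightarrow> real) set \<Rightarrow> bool" where
  "infinite_dimensional S \<longleftrightarrow>
     (\<forall>N::nat. \<exists>qs :: nat \<Rightarrow> 'a \<Rightarrow> real. (\<forall>i<N. qs i \<in> S) \<and>
        (\<forall>c :: nat \<Rightarrow> real. (\<forall>x. (\<Sum>i<N. c i * qs i x) = 0) \<longrightarrow> (\<forall>i<N. c i = 0)))"

end

theory Submission
  imports Defs
begin

lemma inv_inv[simp]: "inv_letter (inv_letter l) = l"
  by (simp add: inv_letter_def)
lemma inv_neq[simp]: "inv_letter l \<noteq> l" "l \<noteq> inv_letter l"
  by (cases l; simp add: inv_letter_def)+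
lemma inv_eq_iff[simp]: "inv_letter a = inv_letter b \<longleftrightarrow> a = b"
  by (metis inv_inv)
lemma fst_inv[simp]: "fst (inv_letter l) = fst l"
  by (simp add: inv_letter_def)

lemma reduced_Nil[simp]: "reduced []" and reduced_single[simp]: "reduced [a]"
  by (auto simp: reduced_def)
lemma reduced_Cons2[simp]: "reduced (a # b # w) \<longleftrightarrow> b \<noteq> inv_letter a \<and> reduced (b # w)"
  unfolding reduced_def
  apply safe
    apply (metis Suc_less_eq length_Cons nth_Cons_0 nth_Cons_Suc zero_less_Suc)
   apply (metis Suc_less_eq length_Cons nth_Cons_Suc)
  by (metis One_nat_def Suc_less_eq length_Cons less_Suc_eq_0_disj nth_Cons_0 nth_Cons_Suc)

lemma reduced_ConsD: "reduced (a # w) \<Longrightarrow> reduced w"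
  by (cases w) auto

lemma reduced_append: "reduced (x @ y) \<longleftrightarrow> reduced x \<and> reduced y \<and>
   (x \<noteq> [] \<longrightarrow> y \<noteq> [] \<longrightarrow> hd y \<noteq> inv_letter (last x))"
proof (induction x)
  case Nil then show ?case by simp
next
  case (Cons a x)
  show ?case
  proof (cases x)
    case Nil then show ?thesis by (cases y) auto
  next
    case (Cons b x') then show ?thesis using Cons.IH by auto
  qed
qed

lemma finv_Nil[simp]: "finv [] = []" and finv_Cons[simp]: "finv (a # w) = finv w @ [inv_letter a]"
  and finv_append[simp]: "finv (x @ y) = finv y @ finv x" and finv_finv[simp]: "finv (finv w) = w"
  and length_finv[simp]: "length (finv w) = length w"
  by (auto simp: finv_def rev_map comp_def)

lemma finv_eq_Nil[simp]: "finv w = [] \<longleftrightarrow> w = []" by (simp add: finv_def)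
lemma hd_finv: "w \<noteq> [] \<Longrightarrow> hd (finv w) = inv_letter (last w)"
  by (simp add: finv_def hd_rev last_map)
lemma last_finv: "w \<noteq> [] \<Longrightarrow> last (finv w) = inv_letter (hd w)"
  by (simp add: finv_def last_rev hd_map)

lemma reduced_finv: "reduced w \<Longrightarrow> reduced (finv w)"
proof (induction w)
  case Nil then show ?case by simp
next
  case (Cons a w)
  then have "reduced w" using reduced_ConsD by blast
  then show ?case using Cons by (cases w) (auto simp: reduced_append hd_finv last_finv hd_Cons_tl)
qed

lemma set_finv: "set (finv w) = inv_letter ` set w" by (simp add: finv_def)

definition rstack :: "letter list \<Rightarrow> bool" where "rstack st \<longleftrightarrow> reduced (rev st)"

lemma rstack_push: "rstack st \<Longrightarrow> rstack (push_letter st b)"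
  unfolding rstack_def push_letter_def
proof (cases st)
  case (Cons y ys)
  assume r: "reduced (rev st)"
  then have "reduced (rev ys)" using Cons by (simp add: reduced_append)
  moreover have "y \<noteq> inv_letter b \<Longrightarrow> reduced (rev st @ [b])"
    using r Cons by (auto simp: reduced_append)
  ultimately show "reduced (rev (case st of [] \<Rightarrow> [b] | y # ys \<Rightarrow> if y = inv_letter b then ys else b # st))"
    using Cons by auto
qed simp


lemma rstack_foldl: "rstack st \<Longrightarrow> rstack (foldl push_letter st w)"
  by (induction w arbitrary: st) (auto intro: rstack_push)

lemma rstack_Nil[simp]: "rstack []" by (simp add: rstack_def)

lemma reduced_reduce: "reduced (reduce w)"
  using rstack_foldl[of "[]" w] by (simp add: rstack_def reduce_def)

lemma set_push: "set (push_letter st b) \<subseteq> insert b (set st)"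
  by (auto simp: push_letter_def split: list.splits)

lemma set_foldl_push: "set (foldl push_letter st w) \<subseteq> set st \<union> set w"
proof (induction w arbitrary: st)
  case (Cons a w)
  then show ?case using set_push[of st a] by fastforce
qed simp

lemma set_reduce: "set (reduce w) \<subseteq> set w"
  using set_foldl_push[of "[]" w] by (simp add: reduce_def)

lemma foldl_push_noncancel:
  "reduced g \<Longrightarrow> (st = [] \<or> g = [] \<or> hd g \<noteq> inv_letter (hd st)) \<Longrightarrow>
   foldl push_letter st g = rev g @ st"
proof (induction g arbitrary: st)
  case Nil then show ?case by simp
next
  case (Cons a g)
  have p: "push_letter st a = a # st"
    using Cons.prems(2) by (auto simp: push_letter_def split: list.splits)
  have "reduced g" using Cons.prems(1) reduced_ConsD by blast
  moreover have "g = [] \<or> hd g \<noteq> inv_letter a"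
    using Cons.prems(1) by (cases g) auto
  ultimately have "foldl push_letter (a # st) g = rev g @ a # st"
    using Cons.IH by auto
  then show ?case by (simp add: p)
qed

lemma reduce_reduced: "reduced g \<Longrightarrow> reduce g = g"
  using foldl_push_noncancel[of g "[]"] by (simp add: reduce_def)

lemma push_cancel: "rstack st \<Longrightarrow> push_letter (push_letter st (inv_letter b)) b = st"
proof (cases st)
  case Nil then show ?thesis by (simp add: push_letter_def)
next
  case (Cons y ys)
  assume r: "rstack st"
  show ?thesis
  proof (cases "y = b")
    case True
    have "ys = [] \<or> hd ys \<noteq> inv_letter b"
      using r Cons True by (cases ys) (auto simp: rstack_def reduced_append)
    then show ?thesis using Cons True by (auto simp: push_letter_def split: list.splits)
  next
    case False
    then show ?thesis using Cons by (auto simp: push_letter_def)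
  qed
qed

lemma foldl_reduce: "rstack st \<Longrightarrow> foldl push_letter st y = foldl push_letter st (reduce y)"
proof (induction y rule: rev_induct)
  case Nil then show ?case by (simp add: reduce_def)
next
  case (snoc b y)
  define S where "S = foldl push_letter [] y"
  have IH: "foldl push_letter st y = foldl push_letter st (rev S)"
    using snoc by (simp add: reduce_def S_def)
  have rS: "rstack S" unfolding S_def by (rule rstack_foldl) simp
  show ?case
  proof (cases "S \<noteq> [] \<and> hd S = inv_letter b")
    case True
    then obtain ss where S: "S = inv_letter b # ss" by (cases S) auto
    have rss: "rstack (foldl push_letter st (rev ss))"
      using rstack_foldl snoc.prems by blast
    have "reduce (y @ [b]) = rev ss"
      by (simp add: reduce_def S_def[symmetric] S push_letter_def)
    moreover have "foldl push_letter st (y @ [b]) = foldl push_letter st (rev ss)"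
      using IH S push_cancel[OF rss] by simp
    ultimately show ?thesis by simp
  next
    case False
    then have "push_letter S b = b # S" by (auto simp: push_letter_def split: list.splits)
    then have "reduce (y @ [b]) = rev S @ [b]" by (simp add: reduce_def S_def[symmetric])
    then show ?thesis using IH by simp
  qed
qed

lemma reduce_append_foldl: "reduce (x @ y) = rev (foldl push_letter (foldl push_letter [] x) y)"
  by (simp add: reduce_def)

lemma reduce_append_reduce: "reduce (x @ y) = reduce (x @ reduce y)"
  unfolding reduce_append_foldl
  using foldl_reduce[OF rstack_foldl[OF rstack_Nil, of x], of y] by simp

lemma reduce_reduce_append: "reduce (x @ y) = reduce (reduce x @ y)"
proof -
  have "foldl push_letter [] x = foldl push_letter [] (reduce x)"
    using foldl_reduce[OF rstack_Nil] by blast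
  then show ?thesis unfolding reduce_append_foldl by simp
qed

lemma reduce_finv_self: "reduce (finv t @ t) = []"
proof (induction t)
  case Nil then show ?case by (simp add: reduce_def)
next
  case (Cons a t)
  define S where "S = foldl push_letter [] (finv t)"
  have rS: "rstack S" unfolding S_def by (rule rstack_foldl) simp
  have "foldl push_letter [] (finv (a # t) @ a # t) = foldl push_letter (push_letter (push_letter S (inv_letter a)) a) t"
    by (simp add: S_def)
  also have "\<dots> = foldl push_letter S t" using push_cancel[OF rS] by simp
  also have "\<dots> = foldl push_letter [] (finv t @ t)" by (simp add: S_def)
  finally show ?case using Cons by (simp add: reduce_def)
qed

lemma reduce_cancel_mid: "reduce (x @ finv t @ t @ y) = reduce (x @ y)"
proof -
  have r: "rstack (foldl push_letter [] x)" by (rule rstack_foldl) simp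
  have "foldl push_letter (foldl push_letter [] x) (finv t @ t) = foldl push_letter [] x"
    using foldl_reduce[OF r, of "finv t @ t"] reduce_finv_self[of t] by simp
  moreover have "foldl push_letter [] (x @ finv t @ t @ y) = foldl push_letter (foldl push_letter [] (x @ finv t @ t)) y"
    by (metis append_assoc foldl_append)
  ultimately show ?thesis unfolding reduce_def by simp
qed

lemma fmult_decomp:
  assumes "reduced g" "reduced h"
  shows "\<exists>x y z. g = x @ y \<and> h = finv y @ z \<and> foldl push_letter (rev g) h = rev (x @ z)"
  using assms
proof (induction h arbitrary: g)
  case Nil then show ?case by (intro exI[of _ g] exI[of _ "[]"]) simp
next
  case (Cons b h)
  have rh: "reduced h" using Cons.prems(2) reduced_ConsD by blast
  show ?case
  proof (cases "g \<noteq> [] \<and> last g = inv_letter b")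
    case True
    then have g: "g = butlast g @ [inv_letter b]" by (metis append_butlast_last_id)
    have rg: "reduced (butlast g)" using Cons.prems(1) g by (metis reduced_append)
    have pr: "push_letter (rev g) b = rev (butlast g)"
      by (subst g) (simp add: push_letter_def)
    obtain x y z where xyz: "butlast g = x @ y" "h = finv y @ z"
      "foldl push_letter (rev (butlast g)) h = rev (x @ z)"
      using Cons.IH[OF rg rh] by blast
    show ?thesis
      by (rule exI[of _ x], rule exI[of _ "y @ [inv_letter b]"], rule exI[of _ z])
        (use xyz g pr in auto)
  next
    case False
    then have pr: "push_letter (rev g) b = rev (g @ [b])"
      by (cases g rule: rev_cases) (auto simp: push_letter_def)
    have rgb: "reduced (g @ [b])" using Cons.prems(1) False by (auto simp: reduced_append)
    obtain x y z where xyz: "g @ [b] = x @ y" "h = finv y @ z"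
      "foldl push_letter (rev (g @ [b])) h = rev (x @ z)"
      using Cons.IH[OF rgb rh] by blast
    have "y = []"
    proof (rule ccontr)
      assume "y \<noteq> []"
      then have "last y = b" using xyz(1) by (metis last_appendR last_snoc)
      then have "hd h = inv_letter b" using xyz(2) \<open>y \<noteq> []\<close> by (simp add: hd_finv)
      moreover have "h \<noteq> []" using xyz(2) \<open>y \<noteq> []\<close> by simp
      ultimately show False using Cons.prems(2) by (cases h) auto
    qed
    show ?thesis
      by (rule exI[of _ g], rule exI[of _ "[]"], rule exI[of _ "b # h"])
        (use xyz pr \<open>y = []\<close> in simp)
  qed
qed

lemma fmult_decomp':
  assumes "reduced g" "reduced h"
  shows "\<exists>x y z. g = x @ y \<and> h = finv y @ z \<and> fmult g h = x @ z"
proof -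
  have "foldl push_letter [] g = rev g" using foldl_push_noncancel[OF assms(1), of "[]"] by simp
  moreover obtain x y z where "g = x @ y" "h = finv y @ z" "foldl push_letter (rev g) h = rev (x @ z)"
    using fmult_decomp[OF assms] by blast
  ultimately show ?thesis
    by (intro exI[of _ x] exI[of _ y] exI[of _ z]) (simp add: fmult_def reduce_append_foldl)
qed

declare cyc_red.simps[simp del]

lemma cyc_red_step: "2 \<le> length w \<Longrightarrow> last w = inv_letter (hd w) \<Longrightarrow> cyc_red w = cyc_red (butlast (tl w))"
  by (subst cyc_red.simps) simp

lemma cyc_red_stop: assumes "\<not> (2 \<le> length w \<and> last w = inv_letter (hd w))" shows "cyc_red w = w"
  by (subst cyc_red.simps) (simp only: if_not_P[OF assms])

lemma hd_mid_last: "2 \<le> length w \<Longrightarrow> w = hd w # butlast (tl w) @ [last w]"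
  by (cases w) auto


lemma cyc_red_decomp: "\<exists>t. g = t @ cyc_red g @ finv t"
proof (induction g rule: cyc_red.induct)
  case (1 w)
  show ?case
  proof (cases "2 \<le> length w \<and> last w = inv_letter (hd w)")
    case True
    then have c: "cyc_red w = cyc_red (butlast (tl w))" using cyc_red_step by blast
    obtain t where t: "butlast (tl w) = t @ cyc_red (butlast (tl w)) @ finv t"
      using 1 True by blast
    have w: "w = hd w # butlast (tl w) @ [inv_letter (hd w)]" using True hd_mid_last by metis
    have "w = (hd w # t) @ cyc_red w @ finv (hd w # t)"
      by (subst w, subst t) (simp add: c)
    then show ?thesis by blast
  next
    case False
    then have "cyc_red w = w" by (rule cyc_red_stop)
    then show ?thesis by (intro exI[of _ "[]"]) simp
  qed
qed

definition cr :: "letter list \<Rightarrow> bool" where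
  "cr c \<longleftrightarrow> (c \<noteq> [] \<longrightarrow> last c \<noteq> inv_letter (hd c))"

lemma cr_cyc_red: "cr (cyc_red g)"
proof (induction g rule: cyc_red.induct)
  case (1 w)
  show ?case
  proof (cases "2 \<le> length w \<and> last w = inv_letter (hd w)")
    case True
    then have "cyc_red w = cyc_red (butlast (tl w))" using cyc_red_step by blast
    then show ?thesis using 1 True by simp
  next
    case False
    then have "cyc_red w = w" by (rule cyc_red_stop)
    moreover have "w \<noteq> [] \<Longrightarrow> last w \<noteq> inv_letter (hd w)"
    proof -
      assume "w \<noteq> []"
      show ?thesis
      proof (cases "length w = 1")
        case True
        then obtain a where "w = [a]" by (cases w) auto
        then show ?thesis by simp
      next
        case False
        then show ?thesis using \<open>w \<noteq> []\<close> \<open>\<not> (2 \<le> length w \<and> _)\<close>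
          by (cases w) (auto simp: Suc_le_eq)
      qed
    qed
    ultimately show ?thesis by (simp add: cr_def)
  qed
qed

lemma cyc_red_id: "cr c \<Longrightarrow> cyc_red c = c"
  by (rule cyc_red_stop) (auto simp: cr_def)

lemma cyc_red_conj: "d \<noteq> [] \<Longrightarrow> cyc_red (t @ d @ finv t) = cyc_red d"
proof (induction t)
  case Nil then show ?case by simp
next
  case (Cons a t)
  let ?w = "(a # t) @ d @ finv (a # t)"
  have "2 \<le> length ?w" using Cons.prems by (cases d) auto
  moreover have "last ?w = inv_letter (hd ?w)" by simp
  ultimately have "cyc_red ?w = cyc_red (butlast (tl ?w))" by (rule cyc_red_step)
  also have "butlast (tl ?w) = t @ d @ finv t"
    by (simp flip: append_assoc)
  finally show ?case using Cons by simp
qed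

abbreviation pw :: "letter list \<Rightarrow> nat \<Rightarrow> letter list" where
  "pw d m \<equiv> concat (replicate m d)"

lemma pw_hd: "d \<noteq> [] \<Longrightarrow> m \<ge> 1 \<Longrightarrow> hd (pw d m) = hd d"
  by (cases m) auto
lemma pw_last: "d \<noteq> [] \<Longrightarrow> m \<ge> 1 \<Longrightarrow> last (pw d m) = last d"
proof (induction m)
  case (Suc m)
  then show ?case by (cases m) auto
qed simp
lemma pw_nonempty: "d \<noteq> [] \<Longrightarrow> m \<ge> 1 \<Longrightarrow> pw d m \<noteq> []"
  by (cases m) auto


lemma reduced_pw: "reduced d \<Longrightarrow> cr d \<Longrightarrow> reduced (pw d m)"
proof (induction m)
  case 0 then show ?case by simp
next
  case (Suc m)
  show ?case
  proof (cases "d = [] \<or> m = 0")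
    case True then show ?thesis using Suc by auto
  next
    case False
    then have "m \<ge> 1" by simp
    then show ?thesis using Suc False pw_hd[of d m] pw_nonempty[of d m]
      by (auto simp: reduced_append cr_def)
  qed
qed

lemma cr_pw: "d \<noteq> [] \<Longrightarrow> cr d \<Longrightarrow> cr (pw d m)"
  by (cases "m = 0") (auto simp: cr_def pw_hd pw_last)

lemma reduced_conj_pw:
  assumes "reduced (t @ d @ finv t)" "d \<noteq> []" "cr d" "m \<ge> 1"
  shows "reduced (t @ pw d m @ finv t)"
proof -
  have r: "reduced t" "reduced d" "reduced (finv t)"
    "t \<noteq> [] \<Longrightarrow> hd d \<noteq> inv_letter (last t)"
    "t \<noteq> [] \<Longrightarrow> hd (finv t) \<noteq> inv_letter (last d)"
    using assms(1,2) by (auto simp: reduced_append)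
  show ?thesis using r reduced_pw[OF r(2) assms(3), of m] pw_nonempty[OF assms(2,4)]
    pw_hd[OF assms(2,4)] pw_last[OF assms(2,4)]
    by (auto simp: reduced_append)
qed

lemma reduce_pw:
  assumes "reduced (t @ d @ finv t)" "d \<noteq> []" "cr d" "m \<ge> 1"
  shows "reduce (pw (t @ d @ finv t) m) = t @ pw d m @ finv t"
  using assms(4)
proof (induction m rule: dec_induct)
  case base then show ?case using assms(1) by (simp add: reduce_reduced)
next
  case (step m)
  have "reduce (pw (t @ d @ finv t) (Suc m)) = reduce ((t @ d @ finv t) @ pw (t @ d @ finv t) m)"
    by simp
  also have "\<dots> = reduce ((t @ d @ finv t) @ (t @ pw d m @ finv t))"
    using reduce_append_reduce step by metis
  also have "\<dots> = reduce ((t @ d) @ finv t @ t @ (pw d m @ finv t))" by simp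
  also have "\<dots> = reduce ((t @ d) @ (pw d m @ finv t))" by (rule reduce_cancel_mid)
  also have "\<dots> = t @ pw d (Suc m) @ finv t"
    using reduced_conj_pw[OF assms(1-3), of "Suc m"] by (simp add: reduce_reduced)
  finally show ?case .
qed

lemma finv_pw: "finv (pw d m) = pw (finv d) m"
proof (induction m)
  case (Suc m)
  have "pw d (Suc m) = pw d m @ d" by (simp add: replicate_append_same[symmetric])
  then show ?case using Suc by simp
qed simp

lemma cr_finv: "cr d \<Longrightarrow> cr (finv d)"
  by (cases "d = []") (auto simp: cr_def hd_finv last_finv)

definition lset :: "letter list \<Rightarrow> letter list \<Rightarrow> nat set" where
  "lset u w = {p. p + length u \<le> length w \<and> (\<forall>k<length u. w ! (p + k) = u ! k)}"
definition lcnt :: "letter list \<Rightarrow> letter list \<Rightarrow> nat" where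
  "lcnt u w = card (lset u w)"

lemma finite_lset[simp]: "finite (lset u w)"
  by (rule finite_subset[of _ "{..length w}"]) (auto simp: lset_def)

lemma lset_append_lower: "lset u x \<union> (\<lambda>p. p + length x) ` lset u y \<subseteq> lset u (x @ y)"
  by (auto simp: lset_def nth_append)

lemma lset_append_upper:
  "lset u (x @ y) \<subseteq> lset u x \<union> (\<lambda>p. p + length x) ` lset u y \<union> {length x - length u..<length x}"
proof
  fix p assume p: "p \<in> lset u (x @ y)"
  show "p \<in> lset u x \<union> (\<lambda>p. p + length x) ` lset u y \<union> {length x - length u..<length x}"
  proof (cases "p + length u \<le> length x")
    case True
    then have "p \<in> lset u x" using p by (auto simp: lset_def nth_append)
    then show ?thesis by blast
  next
    case False
    show ?thesis
    proof (cases "length x \<le> p")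
      case True
      then have "p - length x \<in> lset u y" using p
        by (auto simp: lset_def nth_append)
      then have "p \<in> (\<lambda>p. p + length x) ` lset u y"
        using True by (intro image_eqI[of _ _ "p - length x"]) auto
      then show ?thesis by blast
    next
      case F2: False
      then show ?thesis using False by auto
    qed
  qed
qed

lemma lcnt_append: assumes "u \<noteq> []" shows
  "lcnt u x + lcnt u y \<le> lcnt u (x @ y)" "lcnt u (x @ y) \<le> lcnt u x + lcnt u y + length u"
proof -
  have d: "lset u x \<inter> (\<lambda>p. p + length x) ` lset u y = {}"
    using assms by (auto simp: lset_def)
  have ci: "card ((\<lambda>p. p + length x) ` lset u y) = card (lset u y)"
    by (rule card_image) (auto simp: inj_on_def)
  have "lcnt u x + lcnt u y = card (lset u x \<union> (\<lambda>p. p + length x) ` lset u y)"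
    unfolding lcnt_def using d ci by (simp add: card_Un_disjoint)
  also have "\<dots> \<le> lcnt u (x @ y)" unfolding lcnt_def
    by (rule card_mono[OF finite_lset lset_append_lower])
  finally show "lcnt u x + lcnt u y \<le> lcnt u (x @ y)" .
  have "lcnt u (x @ y) \<le> card (lset u x \<union> (\<lambda>p. p + length x) ` lset u y \<union> {length x - length u..<length x})"
    unfolding lcnt_def by (rule card_mono[OF _ lset_append_upper]) simp
  also have "\<dots> \<le> card (lset u x \<union> (\<lambda>p. p + length x) ` lset u y) + card {length x - length u..<length x}"
    by (rule card_Un_le)
  also have "\<dots> \<le> lcnt u x + lcnt u y + length u"
    unfolding lcnt_def using d ci by (simp add: card_Un_disjoint)
  finally show "lcnt u (x @ y) \<le> lcnt u x + lcnt u y + length u" .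
qed

definition cset :: "letter list \<Rightarrow> letter list \<Rightarrow> nat set" where
  "cset u c = {p. p < length c \<and> (\<forall>k<length u. c ! ((p + k) mod length c) = u ! k)}"
definition cnt :: "letter list \<Rightarrow> letter list \<Rightarrow> nat" where
  "cnt u c = card (cset u c)"

lemma finite_cset[simp]: "finite (cset u c)"
  by (rule finite_subset[of _ "{..<length c}"]) (auto simp: cset_def)

lemma cnt_lcnt: assumes "u \<noteq> []" shows "lcnt u c \<le> cnt u c" "cnt u c \<le> lcnt u c + length u"
proof -
  have s1: "lset u c \<subseteq> cset u c"
  proof
    fix p assume "p \<in> lset u c"
    moreover have "p < length c" using assms calculation by (cases u) (auto simp: lset_def)
    ultimately show "p \<in> cset u c" by (auto simp: lset_def cset_def)
  qed
  then show "lcnt u c \<le> cnt u c" unfolding lcnt_def cnt_def by (intro card_mono) auto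
  have s2: "cset u c \<subseteq> lset u c \<union> {length c - length u..<length c}"
    by (auto simp: lset_def cset_def)
  have "cnt u c \<le> card (lset u c \<union> {length c - length u..<length c})"
    unfolding cnt_def by (rule card_mono[OF _ s2]) simp
  also have "\<dots> \<le> lcnt u c + card {length c - length u..<length c}"
    unfolding lcnt_def by (rule card_Un_le)
  also have "\<dots> \<le> lcnt u c + length u" by simp
  finally show "cnt u c \<le> lcnt u c + length u" .
qed


lemma length_pw[simp]: "length (pw d m) = m * length d"
  by (induction m) auto

lemma nth_pw: "j < m * length d \<Longrightarrow> pw d m ! j = d ! (j mod length d)"
proof (induction m arbitrary: j)
  case 0 then show ?case by simp
next
  case (Suc m)
  show ?case
  proof (cases "j < length d")
    case True then show ?thesis by (simp add: nth_append)
  next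
    case False
    then have "j - length d < m * length d" using Suc.prems by simp
    then have "pw d m ! (j - length d) = d ! ((j - length d) mod length d)" by (rule Suc.IH)
    then show ?thesis using False by (simp add: nth_append le_mod_geq)
  qed
qed

lemma card_mod_set:
  assumes "S \<subseteq> {..<L}"
  shows "card {p. p < m * L \<and> p mod L \<in> S} = m * card S"
proof (induction m)
  case 0 then show ?case by simp
next
  case (Suc m)
  have fS: "finite S" using assms finite_subset by blast
  have eq: "{p. p < Suc m * L \<and> p mod L \<in> S} = {p. p < m * L \<and> p mod L \<in> S} \<union> (\<lambda>s. s + m * L) ` S"
  proof (rule set_eqI, rule iffI)
    fix p assume p: "p \<in> {p. p < Suc m * L \<and> p mod L \<in> S}"
    show "p \<in> {p. p < m * L \<and> p mod L \<in> S} \<union> (\<lambda>s. s + m * L) ` S"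
    proof (cases "p < m * L")
      case True then show ?thesis using p by auto
    next
      case False
      then have "p - m * L < L" using p by auto
      then have "p mod L = p - m * L"
        using False by (metis add_diff_inverse_nat le_add_diff_inverse2 le_mod_geq less_imp_le_nat
            mod_less mod_mult_self3 not_less)
      then show ?thesis using p False by (auto intro!: image_eqI[of _ _ "p - m * L"])
    qed
  next
    fix p assume "p \<in> {p. p < m * L \<and> p mod L \<in> S} \<union> (\<lambda>s. s + m * L) ` S"
    then show "p \<in> {p. p < Suc m * L \<and> p mod L \<in> S}" using assms by auto
  qed
  have d: "{p. p < m * L \<and> p mod L \<in> S} \<inter> (\<lambda>s. s + m * L) ` S = {}" by auto
  have ci: "card ((\<lambda>s. s + m * L) ` S) = card S" by (rule card_image) (auto simp: inj_on_def)
  show ?case unfolding eq using d ci Suc fS by (simp add: card_Un_disjoint)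
qed

lemma cnt_pw: assumes "d \<noteq> []" shows "cnt u (pw d m) = m * cnt u d"
proof (cases "m = 0")
  case True then show ?thesis by (simp add: cnt_def cset_def)
next
  case False
  let ?L = "length d"
  have L: "?L > 0" using assms by simp
  have "cset u (pw d m) = {p. p < m * ?L \<and> p mod ?L \<in> cset u d}"
  proof (rule set_eqI)
    fix p
    have key: "\<And>k. pw d m ! ((p + k) mod (m * ?L)) = d ! ((p mod ?L + k) mod ?L)"
    proof -
      fix k
      have "(p + k) mod (m * ?L) < m * ?L" using L False by simp
      then have "pw d m ! ((p + k) mod (m * ?L)) = d ! ((p + k) mod (m * ?L) mod ?L)" by (rule nth_pw)
      also have "(p + k) mod (m * ?L) mod ?L = (p + k) mod ?L" by (simp add: mod_mod_cancel)
      also have "\<dots> = (p mod ?L + k) mod ?L" by (simp add: mod_add_left_eq)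
      finally show "pw d m ! ((p + k) mod (m * ?L)) = d ! ((p mod ?L + k) mod ?L)" .
    qed
    show "p \<in> cset u (pw d m) \<longleftrightarrow> p \<in> {p. p < m * ?L \<and> p mod ?L \<in> cset u d}"
      unfolding cset_def using key L by auto
  qed
  moreover have "cset u d \<subseteq> {..<?L}" by (auto simp: cset_def)
  ultimately show ?thesis unfolding cnt_def using card_mod_set by simp
qed

definition psi :: "letter list \<Rightarrow> letter list \<Rightarrow> real" where
  "psi u c = real (cnt u c) - real (cnt u (finv c))"
definition Lq :: "letter list \<Rightarrow> letter list \<Rightarrow> real" where
  "Lq u w = real (lcnt u w) - real (lcnt u (finv w))"
definition qm :: "nat \<Rightarrow> letter list \<Rightarrow> letter list \<Rightarrow> real" where
  "qm n u w = (if w \<in> Fn n then psi u (cyc_red w) else 0)"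

lemma Lq_append: assumes "u \<noteq> []"
  shows "\<bar>Lq u (x @ y) - Lq u x - Lq u y\<bar> \<le> real (length u)"
proof -
  have a: "lcnt u x + lcnt u y \<le> lcnt u (x @ y)" "lcnt u (x @ y) \<le> lcnt u x + lcnt u y + length u"
    using lcnt_append[OF assms] by auto
  have b: "lcnt u (finv y) + lcnt u (finv x) \<le> lcnt u (finv y @ finv x)"
    "lcnt u (finv y @ finv x) \<le> lcnt u (finv y) + lcnt u (finv x) + length u"
    using lcnt_append[OF assms] by auto
  have a': "real (lcnt u x) + real (lcnt u y) \<le> real (lcnt u (x @ y))"
     "real (lcnt u (x @ y)) \<le> real (lcnt u x) + real (lcnt u y) + real (length u)"
    using a by (simp_all only: of_nat_add[symmetric] of_nat_le_iff)
  have b': "real (lcnt u (finv y)) + real (lcnt u (finv x)) \<le> real (lcnt u (finv y @ finv x))"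
     "real (lcnt u (finv y @ finv x)) \<le> real (lcnt u (finv y)) + real (lcnt u (finv x)) + real (length u)"
    using b by (simp_all only: of_nat_add[symmetric] of_nat_le_iff)
  show ?thesis unfolding Lq_def using a' b' by (simp add: abs_le_iff)
qed

lemma Lq_finv: "Lq u (finv w) = - Lq u w"
  by (simp add: Lq_def)

lemma psi_Lq: assumes "u \<noteq> []" shows "\<bar>psi u c - Lq u c\<bar> \<le> real (length u)"
proof -
  have a: "real (lcnt u c) \<le> real (cnt u c)" "real (cnt u c) \<le> real (lcnt u c) + real (length u)"
    using cnt_lcnt[OF assms, of c] by (simp_all only: of_nat_add[symmetric] of_nat_le_iff)
  have b: "real (lcnt u (finv c)) \<le> real (cnt u (finv c))"
    "real (cnt u (finv c)) \<le> real (lcnt u (finv c)) + real (length u)"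
    using cnt_lcnt[OF assms, of "finv c"] by (simp_all only: of_nat_add[symmetric] of_nat_le_iff)
  show ?thesis unfolding psi_def Lq_def using a b by (simp add: abs_le_iff)
qed

lemma psi_cyc_Lq: assumes "u \<noteq> []" shows "\<bar>psi u (cyc_red g) - Lq u g\<bar> \<le> 3 * real (length u)"
proof -
  obtain t where t: "g = t @ cyc_red g @ finv t" using cyc_red_decomp by blast
  let ?c = "cyc_red g"
  have 1: "\<bar>Lq u (t @ (?c @ finv t)) - Lq u t - Lq u (?c @ finv t)\<bar> \<le> real (length u)"
    by (rule Lq_append[OF assms])
  have 2: "\<bar>Lq u (?c @ finv t) - Lq u ?c - Lq u (finv t)\<bar> \<le> real (length u)"
    by (rule Lq_append[OF assms])
  have 3: "\<bar>psi u ?c - Lq u ?c\<bar> \<le> real (length u)" by (rule psi_Lq[OF assms])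
  have "Lq u g = Lq u (t @ (?c @ finv t))" using t by simp
  then show ?thesis using 1 2 3 Lq_finv[of u t] by (simp add: abs_le_iff)
qed

lemma Fn_fmult: "g \<in> Fn n \<Longrightarrow> h \<in> Fn n \<Longrightarrow> fmult g h \<in> Fn n"
  using reduced_reduce set_reduce[of "g @ h"] by (auto simp: Fn_def fmult_def)

lemma qm_quasi: assumes "u \<noteq> []" shows "quasi_morphism n (qm n u)"
  unfolding quasi_morphism_def
proof (intro exI[of _ "12 * real (length u)"] ballI)
  fix g h assume g: "g \<in> Fn n" and h: "h \<in> Fn n"
  then have gh: "fmult g h \<in> Fn n" by (rule Fn_fmult)
  obtain x y z where xyz: "g = x @ y" "h = finv y @ z" "fmult g h = x @ z"
    using fmult_decomp'[of g h] g h by (auto simp: Fn_def)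
  have e1: "\<bar>Lq u (x @ z) - Lq u x - Lq u z\<bar> \<le> real (length u)" by (rule Lq_append[OF assms])
  have e2: "\<bar>Lq u (x @ y) - Lq u x - Lq u y\<bar> \<le> real (length u)" by (rule Lq_append[OF assms])
  have e3: "\<bar>Lq u (finv y @ z) - Lq u (finv y) - Lq u z\<bar> \<le> real (length u)" by (rule Lq_append[OF assms])
  have f1: "\<bar>psi u (cyc_red (fmult g h)) - Lq u (fmult g h)\<bar> \<le> 3 * real (length u)"
    by (rule psi_cyc_Lq[OF assms])
  have f2: "\<bar>psi u (cyc_red g) - Lq u g\<bar> \<le> 3 * real (length u)" by (rule psi_cyc_Lq[OF assms])
  have f3: "\<bar>psi u (cyc_red h) - Lq u h\<bar> \<le> 3 * real (length u)" by (rule psi_cyc_Lq[OF assms])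
  show "\<bar>qm n u (fmult g h) - qm n u g - qm n u h\<bar> \<le> 12 * real (length u)"
  proof -
    have q: "qm n u (fmult g h) = psi u (cyc_red (fmult g h))" "qm n u g = psi u (cyc_red g)"
      "qm n u h = psi u (cyc_red h)" using g h gh by (simp_all add: qm_def)
    have "Lq u (finv y) = - Lq u y" by (rule Lq_finv)
    then have "\<bar>Lq u (fmult g h) - Lq u g - Lq u h\<bar> \<le> 3 * real (length u)"
    proof -
      have "Lq u (fmult g h) = Lq u (x @ z)" "Lq u g = Lq u (x @ y)" "Lq u h = Lq u (finv y @ z)"
        using xyz by simp_all
      then show ?thesis using e1 e2 e3 \<open>Lq u (finv y) = - Lq u y\<close> by linarith
    qed
    then show ?thesis unfolding q using f1 f2 f3 by linarith
  qed
qed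

lemma psi_Nil[simp]: "psi u [] = 0" by (simp add: psi_def cnt_def cset_def)
lemma cyc_red_Nil[simp]: "cyc_red [] = []" by (rule cyc_red_stop) simp
lemma reduce_Nil[simp]: "reduce [] = []" by (simp add: reduce_def)

lemma psi_pw: "d \<noteq> [] \<Longrightarrow> psi u (pw d m) = real m * psi u d"
  by (simp add: psi_def finv_pw cnt_pw right_diff_distrib)

lemma psi_finv: "psi u (finv d) = - psi u d" by (simp add: psi_def)

lemma set_pw: "set (pw d m) \<subseteq> set d" by auto

lemma qm_homog: "homogeneous n (qm n u)"
  unfolding homogeneous_def
proof (intro ballI allI)
  fix g k assume g: "g \<in> Fn n"
  obtain t where t: "g = t @ cyc_red g @ finv t" using cyc_red_decomp by blast
  let ?c = "cyc_red g"
  have rg: "reduced (t @ ?c @ finv t)" using g t by (simp add: Fn_def)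
  have Fpow: "fpow g k \<in> Fn n"
  proof -
    have "set (finv g) \<subseteq> {0..<n} \<times> UNIV"
    proof
      fix l assume "l \<in> set (finv g)"
      then obtain l' where "l' \<in> set g" "l = inv_letter l'" by (auto simp: set_finv)
      then show "l \<in> {0..<n} \<times> UNIV" using g by (auto simp: Fn_def inv_letter_def)
    qed
    moreover have "set g \<subseteq> {0..<n} \<times> UNIV" using g by (simp add: Fn_def)
    ultimately have "set (fpow g k) \<subseteq> {0..<n} \<times> UNIV"
      unfolding fpow_def using set_reduce set_pw by (smt (verit) dual_order.trans)
    then show ?thesis using reduced_reduce by (simp add: Fn_def fpow_def)
  qed
  show "qm n u (fpow g k) = of_int k * qm n u g"
  proof (cases "?c = []")
    case True
    have "t = []"
    proof (rule ccontr)
      assume "t \<noteq> []"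
      then show False using rg True by (simp add: reduced_append hd_finv)
    qed
    then have "g = []" using t True by simp
    then show ?thesis by (simp add: qm_def fpow_def)
  next
    case False
    have crc: "cr ?c" by (rule cr_cyc_red)
    show ?thesis
    proof (cases "k = 0")
      case True then show ?thesis by (simp add: qm_def fpow_def)
    next
      case k0: False
      show ?thesis
      proof (cases "0 \<le> k")
        case True
        then have m: "nat k \<ge> 1" using k0 by simp
        have "fpow g k = t @ pw ?c (nat k) @ finv t"
          using True reduce_pw[OF rg False crc m] t by (simp add: fpow_def)
        then have "cyc_red (fpow g k) = pw ?c (nat k)"
          using cyc_red_conj[of "pw ?c (nat k)" t] cyc_red_id[OF cr_pw[OF False crc]]
            pw_nonempty[OF False m] by simp
        then show ?thesis using Fpow g True psi_pw[OF False] by (simp add: qm_def)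
      next
        case kn: False
        then have m: "nat (- k) \<ge> 1" by simp
        have fg: "finv g = t @ finv ?c @ finv t" using t by (metis append_assoc finv_append finv_finv)
        have rg': "reduced (t @ finv ?c @ finv t)" using rg fg reduced_finv t by metis
        have F': "finv ?c \<noteq> []" using False by simp
        have crc': "cr (finv ?c)" using crc by (rule cr_finv)
        have "fpow g k = t @ pw (finv ?c) (nat (- k)) @ finv t"
          using kn reduce_pw[OF rg' F' crc' m] fg by (simp add: fpow_def)
        then have "cyc_red (fpow g k) = pw (finv ?c) (nat (- k))"
          using cyc_red_conj[of "pw (finv ?c) (nat (- k))" t] cyc_red_id[OF cr_pw[OF F' crc']]
            pw_nonempty[OF F' m] by simp
        then show ?thesis using Fpow g kn psi_pw[OF F'] psi_finv by (simp add: qm_def)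
      qed
    qed
  qed
qed

definition WE :: "letter list \<Rightarrow> (letter \<times> letter) set" where
  "WE c = {(c ! i, inv_letter (c ! ((i + 1) mod length c))) | i. i < length c}"

lemma wh_edges_WE: "wh_edges w = WE (cyc_red (reduce w)) \<union> (WE (cyc_red (reduce w)))\<inverse>"
  by (simp add: wh_edges_def WE_def Let_def)

definition adj :: "letter list \<Rightarrow> letter \<Rightarrow> letter \<Rightarrow> bool" where
  "adj u a b \<longleftrightarrow> (\<exists>k. k + 1 < length u \<and> u ! k = a \<and> u ! (k + 1) = b)"

lemma nth_finv: "i < length c \<Longrightarrow> finv c ! i = inv_letter (c ! (length c - 1 - i))"
  by (simp add: finv_def rev_nth)

lemma WE_finv: assumes "(a, b) \<in> WE (finv c)" shows "(b, a) \<in> WE c"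
proof -
  let ?L = "length c"
  obtain i where i: "i < ?L" "a = finv c ! i" "b = inv_letter (finv c ! ((i + 1) mod ?L))"
    using assms by (auto simp: WE_def)
  define j where "j = ?L - 1 - (i + 1) mod ?L"
  have L: "?L > 0" using i(1) by linarith
  have jL: "j < ?L" using L by (simp add: j_def)
  have cb: "c ! j = b"
    using i(3) nth_finv[of "(i + 1) mod ?L" c] L by (simp add: j_def)
  have j1: "(j + 1) mod ?L = ?L - 1 - i"
  proof (cases "i + 1 < ?L")
    case True then show ?thesis by (simp add: j_def)
  next
    case False
    then have "i + 1 = ?L" using i by simp
    then have "j = ?L - 1" by (simp add: j_def)
    then have "j + 1 = ?L" using L by simp
    then show ?thesis using \<open>i + 1 = ?L\<close> by simp
  qed
  have ca: "inv_letter (c ! ((j + 1) mod ?L)) = a"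
    using i(1,2) nth_finv[of i c] j1 by simp
  show ?thesis unfolding WE_def using jL cb ca by blast
qed

lemma occ_edge:
  assumes "cset u c \<noteq> {}" "adj u a b"
  shows "(a, inv_letter b) \<in> WE c"
proof -
  obtain p where p: "p < length c" "\<forall>k<length u. c ! ((p + k) mod length c) = u ! k"
    using assms(1) by (auto simp: cset_def)
  obtain k where k: "k + 1 < length u" "u ! k = a" "u ! (k + 1) = b"
    using assms(2) by (auto simp: adj_def)
  let ?i = "(p + k) mod length c"
  have L: "length c > 0" using p(1) by linarith
  then have i1: "?i < length c" by simp
  have i2: "c ! ?i = a" using p k by simp
  have m: "(?i + 1) mod length c = (p + (k + 1)) mod length c"
    by (simp add: mod_Suc_eq)
  have "c ! ((p + (k + 1)) mod length c) = b" using p(2) k by auto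
  then have i3: "inv_letter (c ! ((?i + 1) mod length c)) = inv_letter b" using m by simp
  have "(a, inv_letter b) = (c ! ?i, inv_letter (c ! ((?i + 1) mod length c)))" using i2 i3 by simp
  then show ?thesis unfolding WE_def using i1 by blast
qed

lemma occ_edge_sym:
  assumes "cset u c \<noteq> {} \<or> cset u (finv c) \<noteq> {}" "adj u a b"
  shows "(a, inv_letter b) \<in> WE c \<union> (WE c)\<inverse>"
  using assms occ_edge[of u c a b] occ_edge[of u "finv c" a b] WE_finv by blast

abbreviation h0 :: letter where "h0 \<equiv> (0, True)"
abbreviation H0 :: letter where "H0 \<equiv> (0, False)"

lemma connected_lemma:
  assumes n: "2 \<le> n" and sym: "sym E"
    and E: "\<And>i s. 1 \<le> i \<Longrightarrow> i < n \<Longrightarrow> ((i, s), h0) \<in> E \<and> ((i, s), H0) \<in> E"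
    and v: "v \<in> wh_vertices n"
  shows "graph_connected (wh_vertices n - {v}) E"
proof -
  let ?V = "wh_vertices n - {v}"
  let ?R = "(E \<inter> (?V \<times> ?V))\<^sup>*"
  have symR: "\<And>x y. (x, y) \<in> ?R \<Longrightarrow> (y, x) \<in> ?R"
  proof -
    have "sym (E \<inter> (?V \<times> ?V))" using sym by (auto simp: sym_def)
    then show "\<And>x y. (x, y) \<in> ?R \<Longrightarrow> (y, x) \<in> ?R"
      by (metis sym_conv_converse_eq rtrancl_converseI)
  qed
  define r where "r = (if v = h0 then H0 else h0)"
  have rV: "r \<in> ?V" using n by (auto simp: r_def wh_vertices_def)
  have Esym: "\<And>x y. (x, y) \<in> E \<Longrightarrow> (y, x) \<in> E" using sym by (auto simp: sym_def)
  have toR: "(x, r) \<in> ?R" if x: "x \<in> ?V" for x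
  proof -
    obtain i s where xi: "x = (i, s)" by (cases x)
    have "i < n" using x xi by (auto simp: wh_vertices_def)
    show ?thesis
    proof (cases "i = 0")
      case False
      then have "(x, r) \<in> E" using E[of i s] \<open>i < n\<close> xi by (auto simp: r_def)
      then show ?thesis using x rV by auto
    next
      case True
      show ?thesis
      proof (cases "x = r")
        case True then show ?thesis by simp
      next
        case False
        then have xH: "x = H0" and vn: "v \<noteq> h0" "v \<noteq> H0" and rh: "r = h0"
          using \<open>i = 0\<close> xi x by (cases s; auto simp: r_def split: if_splits)+
        define z where "z = (if v = (1, True) then (1::nat, False) else (1, True))"
        have zV: "z \<in> ?V" using n by (auto simp: z_def wh_vertices_def)
        have e1: "(x, z) \<in> E" using E[of 1 "snd z"] n Esym xH by (auto simp: z_def)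
        have e2: "(z, r) \<in> E" using E[of 1 "snd z"] n rh by (auto simp: z_def)
        have "(x, z) \<in> ?R" using e1 x zV by auto
        moreover have "(z, r) \<in> ?R" using e2 zV rV by auto
        ultimately show ?thesis by (rule rtrancl_trans)
      qed
    qed
  qed
  show ?thesis unfolding graph_connected_def
  proof (intro ballI)
    fix x y assume "x \<in> ?V" "y \<in> ?V"
    then show "(x, y) \<in> ?R" using toR symR rtrancl_trans by metis
  qed
qed

fun blocks :: "nat list \<Rightarrow> letter list" where
  "blocks [] = [h0]"
| "blocks (j # js) = h0 # (j, True) # H0 # (j, True) # blocks js"

definition uw :: "nat \<Rightarrow> nat \<Rightarrow> letter list" where
  "uw n i = blocks [1..<n] @ replicate (Suc i) (1, True)"

lemma blocks_ne[simp]: "blocks js \<noteq> []" by (cases js) auto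
lemma hd_blocks[simp]: "hd (blocks js) = h0" by (cases js) auto
lemma nth0_blocks[simp]: "blocks js ! 0 = h0" by (cases js) auto
lemma last_blocks[simp]: "last (blocks js) = h0" by (induction js) auto

lemma inv_letter_simp[simp]: "inv_letter (a, b) = (a, \<not> b)" by (simp add: inv_letter_def)

lemma reduced_blocks: "(\<forall>j\<in>set js. 1 \<le> j) \<Longrightarrow> reduced (blocks js)"
proof (induction js)
  case (Cons j js)
  then have "reduced (blocks js)" "1 \<le> j" by auto
  then show ?case by (cases js) auto
qed simp

lemma reduced_replicate: "a \<noteq> inv_letter a \<Longrightarrow> reduced (replicate m a)"
proof (induction m)
  case (Suc m) then show ?case by (cases m) auto
qed simp

lemma set_blocks: "set (blocks js) \<subseteq> {h0, H0} \<union> (\<lambda>j. (j, True)) ` set js"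
  by (induction js) auto

lemma uw_ne: "uw n i \<noteq> []" by (simp add: uw_def)

lemma reduced_uw: "reduced (uw n i)"
  unfolding uw_def reduced_append
  using reduced_blocks[of "[1..<n]"] reduced_replicate[of "(1, True)" "Suc i"] by auto

lemma set_uw: "set (uw n i) \<subseteq> {h0, H0} \<union> (\<lambda>j. (j, True)) ` {1..<n} \<union> {(1, True)}"
  unfolding uw_def using set_blocks[of "[1..<n]"] by auto

lemma uw_Fn: "2 \<le> n \<Longrightarrow> uw n i \<in> Fn n"
  unfolding Fn_def using reduced_uw set_uw[of n i] by auto

lemma hd_uw: "hd (uw n i) = h0" by (simp add: uw_def)
lemma last_uw: "last (uw n i) = (1, True)" by (simp add: uw_def)

lemma cr_uw: "cr (uw n i)" by (simp add: cr_def hd_uw last_uw)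

lemma length_uw: "length (uw n i) = length (blocks [1..<n]) + Suc i" by (simp add: uw_def)

lemma nth_uw_tail: "length (blocks [1..<n]) \<le> k \<Longrightarrow> k < length (uw n i) \<Longrightarrow> uw n i ! k = (1, True)"
  by (simp add: uw_def nth_append length_uw del: replicate_Suc)

lemma nth_uw_0: "uw n i ! 0 = h0" by (simp add: uw_def nth_append)

lemma y_notin_finv: "(1, True) \<notin> set (finv (uw n j))"
  using set_uw[of n j] by (auto simp: set_finv)

lemma cset_no_letter:
  assumes "k < length u" "u ! k \<notin> set c"
  shows "cset u c = {}"
proof (rule ccontr)
  assume "cset u c \<noteq> {}"
  then obtain p where p: "p < length c" "\<forall>k<length u. c ! ((p + k) mod length c) = u ! k"
    by (auto simp: cset_def)
  have "length c > 0" using p(1) by linarith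
  then have "c ! ((p + k) mod length c) \<in> set c" by simp
  then show False using p(2) assms by auto
qed

lemma cnt_finv_uw: "cnt (uw n i) (finv (uw n j)) = 0"
proof -
  have "uw n i ! (length (uw n i) - 1) = (1, True)"
    using last_conv_nth[OF uw_ne] last_uw by metis
  then have "cset (uw n i) (finv (uw n j)) = {}"
    using cset_no_letter[of "length (uw n i) - 1" "uw n i" "finv (uw n j)"] y_notin_finv uw_ne
    by (metis diff_less length_greater_0_conv zero_less_one)
  then show ?thesis by (simp add: cnt_def)
qed

lemma cnt_uw_self: "cnt (uw n i) (uw n i) \<ge> 1"
proof -
  have "0 \<in> cset (uw n i) (uw n i)" using uw_ne by (auto simp: cset_def)
  then have "cset (uw n i) (uw n i) \<noteq> {}" by blast
  then show ?thesis unfolding cnt_def by (simp add: Suc_le_eq card_gt_0_iff)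
qed

lemma cnt_uw_gt: assumes "j < i" shows "cnt (uw n i) (uw n j) = 0"
proof -
  let ?c = "uw n j" and ?u = "uw n i"
  let ?L = "length ?c"
  have "cset ?u ?c = {}"
  proof (rule ccontr)
    assume "cset ?u ?c \<noteq> {}"
    then obtain p where p: "p < ?L" "\<forall>k<length ?u. ?c ! ((p + k) mod ?L) = ?u ! k"
      by (auto simp: cset_def)
    have "?L < length ?u" using assms by (simp add: length_uw)
    then have "?c ! ((p + ?L) mod ?L) = ?u ! ?L" using p(2) by blast
    moreover have "?c ! ((p + 0) mod ?L) = ?u ! 0" using p(2) uw_ne by blast
    moreover have "(p + ?L) mod ?L = (p + 0) mod ?L" by simp
    moreover have "?u ! ?L = (1, True)"
      using nth_uw_tail[of n ?L i] \<open>?L < length ?u\<close> by (simp add: length_uw)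
    ultimately show False using nth_uw_0[of n i] by simp
  qed
  then show ?thesis by (simp add: cnt_def)
qed

lemma qm_uw_self: "2 \<le> n \<Longrightarrow> qm n (uw n i) (uw n i) \<noteq> 0"
  using uw_Fn cyc_red_id[OF cr_uw] cnt_uw_self[of n i] cnt_finv_uw[of n i i]
  by (simp add: qm_def psi_def)

lemma qm_uw_gt: "2 \<le> n \<Longrightarrow> j < i \<Longrightarrow> qm n (uw n i) (uw n j) = 0"
  using uw_Fn cyc_red_id[OF cr_uw] cnt_uw_gt[of j i n] cnt_finv_uw[of n i j]
  by (simp add: qm_def psi_def)

lemma adj_Cons: assumes "adj u a b" shows "adj (x # u) a b"
proof -
  from assms obtain k where k: "k + 1 < length u \<and> u ! k = a \<and> u ! (k + 1) = b"
    unfolding adj_def by blast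
  have "Suc k + 1 < length (x # u) \<and> (x # u) ! Suc k = a \<and> (x # u) ! (Suc k + 1) = b"
    using k by simp
  then show ?thesis unfolding adj_def by blast
qed

lemma adj_app_right: assumes "adj x a b" shows "adj (x @ y) a b"
proof -
  from assms obtain k where k: "k + 1 < length x \<and> x ! k = a \<and> x ! (k + 1) = b"
    unfolding adj_def by blast
  have "k + 1 < length (x @ y) \<and> (x @ y) ! k = a \<and> (x @ y) ! (k + 1) = b"
    using k by (simp add: nth_append)
  then show ?thesis unfolding adj_def by blast
qed

lemma adj_blocks: "j \<in> set js \<Longrightarrow> adj (blocks js) h0 (j, True) \<and> adj (blocks js) (j, True) H0 \<and>
   adj (blocks js) H0 (j, True) \<and> adj (blocks js) (j, True) h0"
proof (induction js)
  case Nil then show ?case by simp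
next
  case (Cons j' js)
  show ?case
  proof (cases "j = j'")
    case True
    have "adj (blocks (j' # js)) h0 (j, True)" unfolding adj_def
      by (rule exI[of _ 0]) (simp add: True)
    moreover have "adj (blocks (j' # js)) (j, True) H0" unfolding adj_def
      by (rule exI[of _ 1]) (simp add: True)
    moreover have "adj (blocks (j' # js)) H0 (j, True)" unfolding adj_def
      by (rule exI[of _ 2]) (simp add: True numeral_2_eq_2)
    moreover have "adj (blocks (j' # js)) (j, True) h0" unfolding adj_def
      by (rule exI[of _ 3]) (simp add: True numeral_3_eq_3)
    ultimately show ?thesis by blast
  next
    case False
    then have "j \<in> set js" using Cons.prems by simp
    then have IH: "adj (blocks js) h0 (j, True) \<and> adj (blocks js) (j, True) H0 \<and>
      adj (blocks js) H0 (j, True) \<and> adj (blocks js) (j, True) h0" by (rule Cons.IH)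
    have lift: "\<And>a b. adj (blocks js) a b \<Longrightarrow> adj (blocks (j' # js)) a b"
      by (simp only: blocks.simps) (intro adj_Cons)
    show ?thesis using IH lift by blast
  qed
qed

lemma adj_uw: "1 \<le> j \<Longrightarrow> j < n \<Longrightarrow> adj (uw n i) h0 (j, True) \<and> adj (uw n i) (j, True) H0 \<and>
   adj (uw n i) H0 (j, True) \<and> adj (uw n i) (j, True) h0"
proof -
  assume "1 \<le> j" "j < n"
  then have "j \<in> set [1..<n]" by simp
  then have "adj (blocks [1..<n]) h0 (j, True) \<and> adj (blocks [1..<n]) (j, True) H0 \<and>
   adj (blocks [1..<n]) H0 (j, True) \<and> adj (blocks [1..<n]) (j, True) h0" by (rule adj_blocks)
  then show ?thesis unfolding uw_def using adj_app_right by metis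
qed

lemma qm_uw_cut: assumes n: "2 \<le> n" and w: "w \<in> cut n" shows "qm n (uw n i) w = 0"
proof (rule ccontr)
  assume q: "qm n (uw n i) w \<noteq> 0"
  let ?u = "uw n i"
  have wF: "w \<in> Fn n" and hc: "has_cut_vertex n w" using w by (auto simp: cut_def)
  let ?c = "cyc_red w"
  have "psi ?u ?c \<noteq> 0" using q wF by (simp add: qm_def)
  then have "cnt ?u ?c \<noteq> 0 \<or> cnt ?u (finv ?c) \<noteq> 0" by (auto simp: psi_def)
  then have occ: "cset ?u ?c \<noteq> {} \<or> cset ?u (finv ?c) \<noteq> {}" by (auto simp: cnt_def)
  have rw: "reduce w = w" using wF by (simp add: Fn_def reduce_reduced)
  let ?E = "wh_edges w"
  have Eeq: "?E = WE ?c \<union> (WE ?c)\<inverse>" using wh_edges_WE[of w] rw by simp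
  have symE: "sym ?E" unfolding Eeq by (auto simp: sym_def)
  have ed: "\<And>a b. adj ?u a b \<Longrightarrow> (a, inv_letter b) \<in> ?E \<and> (inv_letter b, a) \<in> ?E"
    using occ_edge_sym[OF occ] unfolding Eeq by blast
  have E: "((j, s), h0) \<in> ?E \<and> ((j, s), H0) \<in> ?E" if "1 \<le> j" "j < n" for j s
  proof (cases s)
    case True
    have "adj ?u (j, True) H0" "adj ?u (j, True) h0" using adj_uw[OF that, of i] by auto
    then show ?thesis using True ed[of "(j, True)" H0] ed[of "(j, True)" h0] by simp
  next
    case False
    have "adj ?u h0 (j, True)" "adj ?u H0 (j, True)" using adj_uw[OF that, of i] by auto
    then show ?thesis using False ed[of h0 "(j, True)"] ed[of H0 "(j, True)"] by simp
  qed
  have "\<forall>v\<in>wh_vertices n. graph_connected (wh_vertices n - {v}) ?E"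
    using connected_lemma[OF n symE E] by blast
  then show False using hc by (auto simp: has_cut_vertex_def)
qed

lemma qm_uw_mem: "2 \<le> n \<Longrightarrow> qm n (uw n i) \<in> hqm_vanishing_cut n"
proof -
  assume n: "2 \<le> n"
  have "\<forall>w. w \<notin> Fn n \<longrightarrow> qm n (uw n i) w = 0" by (simp add: qm_def)
  moreover have "\<forall>w\<in>cut n. qm n (uw n i) w = 0" using qm_uw_cut[OF n] by blast
  ultimately show ?thesis unfolding hqm_vanishing_cut_def
    using qm_quasi[OF uw_ne] qm_homog by blast
qed

lemma indep:
  assumes n: "2 \<le> n" and H: "\<forall>x. (\<Sum>i<N. c i * qm n (uw n i) x) = 0"
  shows "i < N \<longrightarrow> c i = 0"
proof (induction i rule: less_induct)
  case (less i)
  show ?case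
  proof
    assume iN: "i < N"
    have z: "c j * qm n (uw n j) (uw n i) = 0" if "j \<in> {..<N} - {i}" for j
    proof (cases "j < i")
      case True then show ?thesis using less iN by simp
    next
      case False
      then have "i < j" using that by auto
      then show ?thesis using qm_uw_gt[OF n] by simp
    qed
    have "(\<Sum>j<N. c j * qm n (uw n j) (uw n i)) = c i * qm n (uw n i) (uw n i) + (\<Sum>j\<in>{..<N} - {i}. c j * qm n (uw n j) (uw n i))"
      using iN by (subst sum.remove[of _ i]) auto
    also have "(\<Sum>j\<in>{..<N} - {i}. c j * qm n (uw n j) (uw n i)) = 0" using z by (intro sum.neutral) blast
    finally have "c i * qm n (uw n i) (uw n i) = 0" using H by simp
    then show "c i = 0" using qm_uw_self[OF n] by simp
  qed
qed

theorem mainTheorem11: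
  fixes n :: nat
  assumes "2 \<le> n"
  shows "infinite_dimensional (hqm_vanishing_cut n)"
  unfolding infinite_dimensional_def
  apply (rule allI)
  apply (rule_tac x="\<lambda>i. qm n (uw n i)" in exI)
  apply (rule conjI)
  subgoal using qm_uw_mem[OF assms] by blast
  subgoal using indep[OF assms] by blast
  done

end
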